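(* Let $a,k,d,e,f$ be integers with $1\le a\le k$, $1\le d\le k$, $1\le f\le d$, and $e=d$ or $2e=d$. Then $${}_dC_{dk+e,\,da+f}(x;q)-{}_dC_{dk+e,\,da+f-1}(x;q)=\begin{cases}(xq)^{da+f-1}\,{}_dT_{dk+e,\,dk-da+d}(xq;q)&\text{if } f\le e,\\ (xq)^{da+f-1}\,{}_dT_{dk+e,\,dk-da}(xq;q)&\text{if } f>e.\end{cases}$$
   Context: Fix integers $d,k\ge1$ and $e$ with $e=d$ or $2e=d$. Notation: $(a;q)_n=\prod_{j=0}^{n-1}(1-aq^j)$, $(a;q)_\infty=\prod_{j\ge0}(1-aq^j)$. Write $X=xq$ and $\binom{n+1}{2}=n(n+1)/2$. For $n\ge0$ set $$P_n(x;q)=\frac{(-1)^n x^{(dk+e)n}q^{(2dk+2e+d)\binom{n+1}{2}}\,((xq)^d;q^{2d})_\infty}{(q^d;q^d)_n\,((xq^{n+1})^d;q^d)_\infty\,(xq;q^2)_\infty},\qquad t\alpha_n(x;q)=\frac{(-1)^n x^{(dk+e)n}q^{(2dk+2e+d)\binom{n+1}{2}}\,((xq^2)^d;q^{2d})_\infty}{(q^d;q^d)_n\,((xq^{n+1})^d;q^d)_\infty\,(xq^2;q^2)_\infty},$$ and $t\beta_n(x;q)=-t\alpha_n(x;q)$. For $f\in\{1,\dots,d\}$ define $c\alpha[f]_n(x;q)=P_n(x;q)\,q^{n(f-e)}\,U_f$ and $c\beta[f]_n(x;q)=-P_n(x;q)\,q^{n(e-f)}\,V_f$, where $U_f=\frac{1-X^{d+f-e}}{1-X^d}+q^{nd}\frac{X^{d+f-e}-X^d}{1-X^d}$,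 $V_f=\frac{X^{e-f}-X^d}{1-X^d}+q^{-nd}\frac{1-X^{e-f}}{1-X^d}$ if $f<e$; $U_f=V_f=1$ if $f=e$; $U_f=\frac{X^{f-e}-X^d}{1-X^d}+q^{-nd}\frac{1-X^{f-e}}{1-X^d}$, $V_f=\frac{1-X^{d-f+e}}{1-X^d}+q^{nd}\frac{X^{d-f+e}-X^d}{1-X^d}$ if $f>e$. For an integer $N\ge0$ let $\bar N\in\{1,\dots,d\}$ be the residue with $\bar N\equiv N\pmod d$ and define $${}_dC_{dk+e,N}(x;q)=\sum_{n\ge0}\Big(c\alpha[\bar N]_n(x;q)\,q^{-nN}+c\beta[\bar N]_n(x;q)\,(xq^{n+1})^N\Big),\qquad {}_dT_{dk+e,N}(x;q)=\sum_{n\ge0}\Big(t\alpha_n(x;q)\,q^{-nN}+t\beta_n(x;q)\,(xq^{n+1})^N\Big).$$ Identities are as formal power series in $x$ and $q$ (equivalently analytic functions for $|q|<1$, $|x|\le1$). *)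

theory Defs
  imports "HOL-Analysis.Analysis"
begin

definition qpoch :: "complex \<Rightarrow> complex \<Rightarrow> nat \<Rightarrow> complex" where
  "qpoch a q n = (\<Prod>j<n. (1 - a * q ^ j))"

definition qpochinf :: "complex \<Rightarrow> complex \<Rightarrow> complex" where
  "qpochinf a q = prodinf (\<lambda>j. 1 - a * q ^ j)"

definition pref :: "nat \<Rightarrow> nat \<Rightarrow> nat \<Rightarrow> complex \<Rightarrow> complex \<Rightarrow> nat \<Rightarrow> complex" where
  "pref d k e x q n = (-1) ^ n * x ^ ((d*k+e)*n) * q ^ ((2*d*k+2*e+d) * (n*(n+1) div 2))"

definition Pn :: "nat \<Rightarrow> nat \<Rightarrow> nat \<Rightarrow> complex \<Rightarrow> complex \<Rightarrow> nat \<Rightarrow> complex" where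
  "Pn d k e x q n = pref d k e x q n * qpochinf ((x*q)^d) (q^(2*d))
     / (qpoch (q^d) (q^d) n * qpochinf ((x*q^(n+1))^d) (q^d) * qpochinf (x*q) (q^2))"

definition talpha :: "nat \<Rightarrow> nat \<Rightarrow> nat \<Rightarrow> complex \<Rightarrow> complex \<Rightarrow> nat \<Rightarrow> complex" where
  "talpha d k e x q n = pref d k e x q n * qpochinf ((x*q^2)^d) (q^(2*d))
     / (qpoch (q^d) (q^d) n * qpochinf ((x*q^(n+1))^d) (q^d) * qpochinf (x*q^2) (q^2))"

definition tbeta :: "nat \<Rightarrow> nat \<Rightarrow> nat \<Rightarrow> complex \<Rightarrow> complex \<Rightarrow> nat \<Rightarrow> complex" where
  "tbeta d k e x q n = - talpha d k e x q n"

definition Uf :: "nat \<Rightarrow> nat \<Rightarrow> nat \<Rightarrow> complex \<Rightarrow> complex \<Rightarrow> nat \<Rightarrow> complex" where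
  "Uf d e f x q n = (let X = x*q in
     if f < e then (1 - X^(d+f-e)) / (1 - X^d) + q^(n*d) * (X^(d+f-e) - X^d) / (1 - X^d)
     else if f = e then 1
     else (X^(f-e) - X^d) / (1 - X^d) + inverse (q^(n*d)) * (1 - X^(f-e)) / (1 - X^d))"

definition Vf :: "nat \<Rightarrow> nat \<Rightarrow> nat \<Rightarrow> complex \<Rightarrow> complex \<Rightarrow> nat \<Rightarrow> complex" where
  "Vf d e f x q n = (let X = x*q in
     if f < e then (X^(e-f) - X^d) / (1 - X^d) + inverse (q^(n*d)) * (1 - X^(e-f)) / (1 - X^d)
     else if f = e then 1
     else (1 - X^(d-f+e)) / (1 - X^d) + q^(n*d) * (X^(d-f+e) - X^d) / (1 - X^d))"

definition calpha :: "nat \<Rightarrow> nat \<Rightarrow> nat \<Rightarrow> nat \<Rightarrow> complex \<Rightarrow> complex \<Rightarrow> nat \<Rightarrow> complex" where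
  "calpha d k e f x q n = Pn d k e x q n * q powi (int n * (int f - int e)) * Uf d e f x q n"

definition cbeta :: "nat \<Rightarrow> nat \<Rightarrow> nat \<Rightarrow> nat \<Rightarrow> complex \<Rightarrow> complex \<Rightarrow> nat \<Rightarrow> complex" where
  "cbeta d k e f x q n = - Pn d k e x q n * q powi (int n * (int e - int f)) * Vf d e f x q n"

definition resid :: "nat \<Rightarrow> nat \<Rightarrow> nat" where
  "resid d N = (if N mod d = 0 then d else N mod d)"

definition Cfun :: "nat \<Rightarrow> nat \<Rightarrow> nat \<Rightarrow> nat \<Rightarrow> complex \<Rightarrow> complex \<Rightarrow> complex" where
  "Cfun d k e N x q = (\<Sum>n. calpha d k e (resid d N) x q n * inverse (q ^ (n*N))
       + cbeta d k e (resid d N) x q n * (x * q^(n+1)) ^ N)"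

definition Tfun :: "nat \<Rightarrow> nat \<Rightarrow> nat \<Rightarrow> nat \<Rightarrow> complex \<Rightarrow> complex \<Rightarrow> complex" where
  "Tfun d k e N x q = (\<Sum>n. talpha d k e x q n * inverse (q ^ (n*N))
       + tbeta d k e x q n * (x * q^(n+1)) ^ N)"

end

theory Submission
  imports Defs
begin

lemma qpochinf_rec:
  assumes "norm q < 1"
  shows "qpochinf a q = (1 - a) * qpochinf (a*q) q"
proof -
  have s: "summable (\<lambda>j. norm ((1 - a*q^j) - 1))"
    using assms by (simp add: norm_mult norm_power summable_geometric)
  have cp: "convergent_prod (\<lambda>j. 1 - a*q^j)"
    by (rule abs_convergent_prod_imp_convergent_prod[OF summable_imp_abs_convergent_prod[OF s]])
  have "(\<lambda>j. 1 - a*q^j) has_prod ((\<Prod>k<1. 1 - a*q^k) * (\<Prod>k. 1 - a*q^(k+1)))"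
    by (rule has_prod_ignore_initial_segment'[OF cp])
  hence "qpochinf a q = (1 - a) * (\<Prod>k. 1 - a*q^(k+1))"
    unfolding qpochinf_def by (simp add: has_prod_unique[symmetric])
  also have "(\<lambda>k. 1 - a*q^(k+1)) = (\<lambda>k. 1 - (a*q)*q^k)" by (auto simp: algebra_simps)
  finally show ?thesis by (simp add: qpochinf_def)
qed

lemma powi_nat: "t \<noteq> 0 \<Longrightarrow> b \<le> a + c \<Longrightarrow> (t::complex) powi (int a - int b) * t^c = t^(a+c-b)"
proof -
  assume t: "t \<noteq> 0" and h: "b \<le> a + c"
  have "t powi (int a - int b) * t powi (int c) = t powi (int a - int b + int c)"
    using t by (simp add: power_int_add)
  also have "int a - int b + int c = int (a+c-b)" using h by simp
  finally show ?thesis by simp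
qed

lemma powi_nat_inv: "t \<noteq> 0 \<Longrightarrow> a \<le> b + c \<Longrightarrow> (t::complex) powi (int a - int b) * inverse (t^c) = inverse (t^(b+c-a))"
proof -
  assume t: "t \<noteq> 0" and h: "a \<le> b + c"
  have "t powi (int a - int b) * t powi (- int c) = t powi (int a - int b - int c)"
    using t power_int_add[of t "int a - int b" "- int c"] by simp
  also have "int a - int b - int c = - int (b+c-a)" using h by simp
  finally show ?thesis by (simp add: power_int_minus)
qed

lemma powi_q: "(q::complex) powi (int n * z) = (q^n) powi z"
  by (simp add: power_int_mult)

lemma tri_Suc: "(Suc n * (Suc n + 1)) div 2 = n*(n+1) div 2 + (n+1)"
proof -
  have "Suc n * (Suc n + 1) = n*(n+1) + 2*(n+1)" by (simp add: algebra_simps)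
  thus ?thesis by simp
qed

lemma pref_Suc: "pref d k e x q (Suc n) = pref d k e x q n * (-(x^(d*k+e)) * q^((2*d*k+2*e+d)*(n+1)))"
proof -
  have a: "(d*k+e) * Suc n = (d*k+e)*n + (d*k+e)" by simp
  have b: "(2*d*k+2*e+d) * (n*(n+1) div 2 + (n+1)) = (2*d*k+2*e+d) * (n*(n+1) div 2) + (2*d*k+2*e+d)*(n+1)"
    by (simp add: distrib_left)
  show ?thesis unfolding pref_def tri_Suc a b power_add by simp
qed

lemma pref_xq: "pref d k e (x*q) q n = pref d k e x q n * (q^n)^(d*k+e)"
  unfolding pref_def by (simp add: power_mult_distrib power_mult[symmetric] algebra_simps)

definition Kf :: "nat \<Rightarrow> complex \<Rightarrow> complex \<Rightarrow> nat \<Rightarrow> complex" where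
  "Kf d x q n = qpochinf ((x*q^3)^d) (q^(2*d)) /
     (qpoch (q^d) (q^d) n * qpochinf ((x*q^(n+2))^d) (q^d) * qpochinf (x*q^3) (q^2))"

lemma nq: "norm (q::complex) < 1 \<Longrightarrow> 1 \<le> m \<Longrightarrow> norm (q^m) < 1"
  by (simp add: norm_power power_less_one_iff)

lemma nxq: "norm (q::complex) < 1 \<Longrightarrow> norm (x::complex) \<le> 1 \<Longrightarrow> 1 \<le> m \<Longrightarrow> norm (x*q^m) < 1"
proof -
  assume a: "norm q < 1" "norm x \<le> 1" "1 \<le> m"
  have "norm (q^m) < 1" using nq a by blast
  hence "norm x * norm (q^m) < 1" using a(2)
    by (metis dual_order.strict_trans2 mult_left_le_one_le mult_less_cancel_right1 norm_ge_zero not_le)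
  thus ?thesis by (simp add: norm_mult)
qed

lemma q3: "(q::complex)*q^2 = q^3" by (simp add: power3_eq_cube power2_eq_square)

lemma shift_d: "((x::complex)*q^m)^d * q^d = (x*q^(m+1))^d"
  by (simp add: power_mult_distrib mult_ac)

lemma one_minus_nz: "norm (w::complex) < 1 \<Longrightarrow> 1 - w \<noteq> 0"
  by auto

lemma pow_lt1: "norm (w::complex) < 1 \<Longrightarrow> 1 \<le> d \<Longrightarrow> norm (w^d) < 1"
  by (simp add: norm_power power_less_one_iff)

lemma Pn_eq:
  assumes q: "norm q < 1" and x: "norm x \<le> 1" and d: "1 \<le> d"
  shows "Pn d k e x q n = pref d k e x q n * (1-(x*q)^d) / ((1-(x*q^(n+1))^d)*(1-x*q)) * Kf d x q n"
proof -
  have q2d: "norm (q^(2*d)) < 1" using nq[OF q] d by simp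
  have qd: "norm (q^d) < 1" using nq[OF q] d by simp
  have q2: "norm (q^2) < 1" using nq[OF q] by simp
  have e1: "qpochinf ((x*q)^d) (q^(2*d)) = (1-(x*q)^d) * qpochinf ((x*q^3)^d) (q^(2*d))"
    using qpochinf_rec[OF q2d, of "(x*q)^d"]
    by (simp add: power_mult_distrib power_mult[symmetric] power_add[symmetric] mult.assoc)
  have e2: "qpochinf (x*q) (q^2) = (1 - x*q) * qpochinf (x*q^3) (q^2)"
    using qpochinf_rec[OF q2, of "x*q"] by (simp add: mult.assoc q3)
  have e3: "qpochinf ((x*q^(n+1))^d) (q^d) = (1-(x*q^(n+1))^d) * qpochinf ((x*q^(n+2))^d) (q^d)"
    using qpochinf_rec[OF qd, of "(x*q^(n+1))^d"] shift_d[of x q "n+1" d] by simp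
  show ?thesis unfolding Pn_def Kf_def e1 e2 e3
    by (simp add: divide_inverse inverse_mult_distrib mult_ac)
qed

lemma talpha_eq:
  shows "talpha d k e (x*q) q n = pref d k e x q n * (q^n)^(d*k+e) * Kf d x q n"
proof -
  have a: "x*q*q^2 = x*q^3" "x*q*q^(n+1) = x*q^(n+2)" using q3[of q] by (simp_all add: mult.assoc)
  show ?thesis unfolding talpha_def Kf_def pref_xq a by (simp add: divide_inverse mult_ac)
qed

lemma canc: "(w::complex) \<noteq> 0 \<Longrightarrow> a * b / (w * c) * (k * w / z) = a * b / (z * c) * k"
proof -
  assume w: "w \<noteq> 0"
  have "a * b / (w * c) * (k * w / z) = (a*b*inverse c*k*inverse z) * (w * inverse w)"
    by (simp add: divide_inverse inverse_mult_distrib mult_ac)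
  also have "\<dots> = a * b / (z * c) * k" using w by (simp add: divide_inverse inverse_mult_distrib mult_ac)
  finally show ?thesis .
qed

lemma Pn_Suc_eq:
  assumes q: "norm q < 1" and x: "norm x \<le> 1" and d: "1 \<le> d"
  shows "Pn d k e x q (Suc n) = pref d k e x q n * (-(x^(d*k+e)) * q^((2*d*k+2*e+d)*(n+1)))
     * (1-(x*q)^d) / ((1-q^(d*(n+1)))*(1-x*q)) * Kf d x q n"
proof -
  have w0: "norm (x*q^(n+2)) < 1" using nxq[OF q x, of "n+2"] by simp
  have w: "norm ((x*q^(n+2))^d) < 1" using pow_lt1[OF w0 d] .
  have P: "Pn d k e x q (Suc n) = pref d k e x q (Suc n) * (1-(x*q)^d) / ((1-(x*q^(n+2))^d)*(1-x*q)) * Kf d x q (Suc n)"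
    using Pn_eq[OF q x d, of k e "Suc n"] by simp
  have Q: "qpoch (q^d) (q^d) (Suc n) = qpoch (q^d) (q^d) n * (1 - q^(d*(n+1)))"
    unfolding qpoch_def by (simp add: power_mult[symmetric] power_add[symmetric] algebra_simps)
  have nz: "1-(x*q^(n+2))^d \<noteq> 0" using w by auto
  have K: "Kf d x q (Suc n) = Kf d x q n * (1-(x*q^(n+2))^d) / (1 - q^(d*(n+1)))"
  proof -
    have qd: "norm (q^d) < 1" using nq[OF q] d by simp
    have "qpochinf ((x*q^(n+2))^d) (q^d) = (1-(x*q^(n+2))^d) * qpochinf ((x*q^(Suc n+2))^d) (q^d)"
      using qpochinf_rec[OF qd, of "(x*q^(n+2))^d"] shift_d[of x q "n+2" d] by simp
    then show ?thesis unfolding Kf_def Q using nz by (simp add: divide_inverse inverse_mult_distrib mult_ac)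
  qed
  show ?thesis unfolding P K using canc[OF nz] by (simp add: pref_Suc)
qed

lemma canc2: "(w::complex) \<noteq> 0 \<Longrightarrow> P * R * A / (Q * B) * K = P * A / (w * B) * K * (R * w / Q)"
proof -
  assume w: "w \<noteq> 0"
  have "P * A / (w * B) * K * (R * w / Q) = (P * R * A * inverse B * K * inverse Q) * (w * inverse w)"
    by (simp add: divide_inverse inverse_mult_distrib mult_ac)
  also have "\<dots> = P * R * A / (Q * B) * K" using w by (simp add: divide_inverse inverse_mult_distrib mult_ac)
  finally show ?thesis by simp
qed

lemma Pn_rec:
  assumes q: "norm q < 1" and x: "norm x \<le> 1" and d: "1 \<le> d"
  shows "Pn d k e x q (Suc n) = Pn d k e x q n * ((-(x^(d*k+e)) * q^((2*d*k+2*e+d)*(n+1)))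
     * (1-(x*q^(n+1))^d) / (1-q^(d*(n+1))))"
proof -
  have w0: "norm (x*q^(n+1)) < 1" using nxq[OF q x, of "n+1"] by simp
  have nz: "1-(x*q^(n+1))^d \<noteq> 0" using pow_lt1[OF w0 d] by auto
  show ?thesis unfolding Pn_Suc_eq[OF q x d] Pn_eq[OF q x d, of k e n]
    using canc2[OF nz] by simp
qed

lemma Pn_norm_Suc:
  assumes q: "norm q < 1" and x: "norm x \<le> 1" and d: "1 \<le> d"
  shows "norm (Pn d k e x q (Suc n)) \<le> norm (Pn d k e x q n) * ((2/(1-norm q)) * norm q ^ n)"
proof -
  let ?r = "norm q"
  have r0: "0 \<le> ?r" by simp
  have a1: "norm (x^(d*k+e)) \<le> 1" using x by (simp add: norm_power power_le_one)
  have a2: "norm (q^((2*d*k+2*e+d)*(n+1))) \<le> ?r ^ n"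
  proof -
    have c1: "1 \<le> 2*d*k+2*e+d" using d by simp
    have "1*(n+1) \<le> (2*d*k+2*e+d)*(n+1)" by (rule mult_le_mono1[OF c1])
    hence "n \<le> (2*d*k+2*e+d)*(n+1)" by simp
    hence "?r ^ ((2*d*k+2*e+d)*(n+1)) \<le> ?r ^ n" using q by (intro power_decreasing) auto
    thus ?thesis by (simp add: norm_power)
  qed
  have w0: "norm (x*q^(n+1)) < 1" using nxq[OF q x, of "n+1"] by simp
  have a3: "norm (1-(x*q^(n+1))^d) \<le> 2"
  proof -
    have "norm ((x*q^(n+1))^d) < 1" using pow_lt1[OF w0 d] .
    hence "norm (1-(x*q^(n+1))^d) \<le> 1 + 1" using norm_triangle_ineq4[of 1 "(x*q^(n+1))^d"] by simp
    thus ?thesis by simp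
  qed
  have a4: "1 - ?r \<le> norm (1-q^(d*(n+1)))"
  proof -
    have "1 \<le> d*(n+1)" using d by simp
    hence "?r ^ (d*(n+1)) \<le> ?r ^ 1" using q by (intro power_decreasing) auto
    hence "?r ^ (d*(n+1)) \<le> ?r" by simp
    hence "norm (q^(d*(n+1))) \<le> ?r" by (simp add: norm_power)
    moreover have "1 - norm (q^(d*(n+1))) \<le> norm (1-q^(d*(n+1)))"
      using norm_triangle_ineq2[of 1 "q^(d*(n+1))"] by simp
    ultimately show ?thesis by simp
  qed
  have pos: "0 < 1 - ?r" using q by simp
  have "norm ((-(x^(d*k+e)) * q^((2*d*k+2*e+d)*(n+1))) * (1-(x*q^(n+1))^d) / (1-q^(d*(n+1))))
      = norm (x^(d*k+e)) * norm (q^((2*d*k+2*e+d)*(n+1))) * norm (1-(x*q^(n+1))^d) / norm (1-q^(d*(n+1)))"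
    by (simp add: norm_mult norm_divide)
  also have "\<dots> \<le> 1 * ?r ^ n * 2 / (1 - ?r)"
    by (intro frac_le mult_mono a1 a2 a3 a4 pos) auto
  finally have R: "norm ((-(x^(d*k+e)) * q^((2*d*k+2*e+d)*(n+1))) * (1-(x*q^(n+1))^d) / (1-q^(d*(n+1))))
      \<le> (2/(1-norm q)) * norm q ^ n" by (simp add: mult.commute)
  show ?thesis unfolding Pn_rec[OF q x d] norm_mult
    by (rule mult_left_mono[OF R]) simp
qed

lemma ratio_summable:
  fixes h :: "nat \<Rightarrow> real"
  assumes h0: "\<And>n. 0 \<le> h n" and hs: "\<And>n. h (Suc n) \<le> M * r^n * h n" and r: "0 \<le> r" "r < 1"
  shows "summable h"
proof -
  have "(\<lambda>n. M * r^n) \<longlonglongrightarrow> M * 0" by (intro tendsto_mult tendsto_const LIMSEQ_power_zero) (use r in auto)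
  hence "eventually (\<lambda>n. M * r^n < 1/2) sequentially" by (intro order_tendstoD) auto
  then obtain N where N: "\<And>n. n \<ge> N \<Longrightarrow> M * r^n < 1/2" by (auto simp: eventually_sequentially)
  show ?thesis
  proof (rule summable_ratio_test[of "1/2" N])
    fix n assume "N \<le> n"
    hence "M * r^n * h n \<le> 1/2 * h n" using N[of n] h0[of n] by (intro mult_right_mono) auto
    thus "norm (h (Suc n)) \<le> 1/2 * norm (h n)" using hs[of n] h0 by simp
  qed simp
qed

lemma Pn_dom_summable:
  assumes q: "norm q < 1" and x: "norm x \<le> 1" and d: "1 \<le> d" and q0: "q \<noteq> 0"
  shows "summable (\<lambda>n. norm (Pn d k e x q n) * inverse (norm q ^ (n*L)))"
proof (rule ratio_summable[where M = "2/(1-norm q) * inverse (norm q ^ L)" and r = "norm q"])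
  fix n
  have r0: "0 < norm q" using q0 by simp
  have "norm (Pn d k e x q (Suc n)) * inverse (norm q ^ (Suc n * L))
     \<le> (norm (Pn d k e x q n) * ((2/(1-norm q)) * norm q ^ n)) * inverse (norm q ^ (Suc n * L))"
    by (rule mult_right_mono[OF Pn_norm_Suc[OF q x d]]) simp
  also have "\<dots> = 2/(1-norm q) * inverse (norm q ^ L) * norm q ^ n * (norm (Pn d k e x q n) * inverse (norm q ^ (n*L)))"
    by (simp add: power_add mult_ac)
  finally show "norm (Pn d k e x q (Suc n)) * inverse (norm q ^ (Suc n * L))
     \<le> 2/(1-norm q) * inverse (norm q ^ L) * norm q ^ n * (norm (Pn d k e x q n) * inverse (norm q ^ (n*L)))" .
qed (use q in auto)

lemma affine_bound: "norm (w::complex) \<le> M \<Longrightarrow> 1 \<le> M \<Longrightarrow> norm (a + b * w) \<le> (norm a + norm b) * M"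
proof -
  assume w: "norm w \<le> M" and M: "1 \<le> M"
  have "norm (a + b*w) \<le> norm a + norm b * norm w" by (metis norm_mult norm_triangle_ineq)
  also have "\<dots> \<le> norm a * M + norm b * M"
    using w M by (intro add_mono mult_left_mono) (auto simp: mult_le_cancel_left1)
  finally show ?thesis by (simp add: distrib_right)
qed

lemma inv_ge1: "0 < (r::real) \<Longrightarrow> r \<le> 1 \<Longrightarrow> 1 \<le> inverse (r^m)"
  by (simp add: one_le_inverse power_le_one)

lemma qnd_bounds:
  fixes q :: complex
  assumes q0: "q \<noteq> 0" and q: "norm q < 1"
  shows "norm (q^(n*d)) \<le> inverse (norm q ^ (n*d))" "norm (inverse (q^(n*d))) \<le> inverse (norm q ^ (n*d))"
    "1 \<le> inverse (norm q ^ (n*d))"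
proof -
  have r: "0 < norm q" "norm q \<le> 1" using q0 q by auto
  show g: "1 \<le> inverse (norm q ^ (n*d))" using inv_ge1[OF r] .
  have "norm (q^(n*d)) \<le> 1" using r by (simp add: norm_power power_le_one)
  thus "norm (q^(n*d)) \<le> inverse (norm q ^ (n*d))" using g by linarith
  show "norm (inverse (q^(n*d))) \<le> inverse (norm q ^ (n*d))" by (simp add: norm_inverse norm_power)
qed

lemma Uf_bound:
  assumes q0: "q \<noteq> 0" and q: "norm q < 1"
  shows "\<exists>B. \<forall>n. norm (Uf d e g x q n) \<le> B * inverse (norm q ^ (n*d))"
proof -
  let ?X = "x*q"
  consider "g < e" | "g = e" | "e < g" by linarith
  then show ?thesis
  proof cases
    case 1
    let ?a = "(1 - ?X^(d+g-e)) / (1 - ?X^d)" and ?b = "(?X^(d+g-e) - ?X^d) / (1 - ?X^d)"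
    show ?thesis
    proof (intro exI allI)
      fix n
      have eq: "Uf d e g x q n = ?a + ?b * q^(n*d)" using 1 by (simp add: Uf_def Let_def mult_ac)
      show "norm (Uf d e g x q n) \<le> (norm ?a + norm ?b) * inverse (norm q ^ (n*d))"
        unfolding eq by (rule affine_bound[OF qnd_bounds(1)[OF q0 q] qnd_bounds(3)[OF q0 q]])
    qed
  next
    case 2
    show ?thesis
    proof (intro exI allI)
      fix n
      show "norm (Uf d e g x q n) \<le> 1 * inverse (norm q ^ (n*d))"
        using 2 qnd_bounds(3)[OF q0 q] by (simp add: Uf_def)
    qed
  next
    case 3
    let ?a = "(?X^(g-e) - ?X^d) / (1 - ?X^d)" and ?b = "(1 - ?X^(g-e)) / (1 - ?X^d)"
    show ?thesis
    proof (intro exI allI)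
      fix n
      have eq: "Uf d e g x q n = ?a + ?b * inverse (q^(n*d))" using 3 by (simp add: Uf_def Let_def mult_ac)
      show "norm (Uf d e g x q n) \<le> (norm ?a + norm ?b) * inverse (norm q ^ (n*d))"
        unfolding eq by (rule affine_bound[OF qnd_bounds(2)[OF q0 q] qnd_bounds(3)[OF q0 q]])
    qed
  qed
qed

lemma Vf_bound:
  assumes q0: "q \<noteq> 0" and q: "norm q < 1"
  shows "\<exists>B. \<forall>n. norm (Vf d e g x q n) \<le> B * inverse (norm q ^ (n*d))"
proof -
  let ?X = "x*q"
  consider "g < e" | "g = e" | "e < g" by linarith
  then show ?thesis
  proof cases
    case 1
    let ?a = "(?X^(e-g) - ?X^d) / (1 - ?X^d)" and ?b = "(1 - ?X^(e-g)) / (1 - ?X^d)"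
    show ?thesis
    proof (intro exI allI)
      fix n
      have eq: "Vf d e g x q n = ?a + ?b * inverse (q^(n*d))" using 1 by (simp add: Vf_def Let_def mult_ac)
      show "norm (Vf d e g x q n) \<le> (norm ?a + norm ?b) * inverse (norm q ^ (n*d))"
        unfolding eq by (rule affine_bound[OF qnd_bounds(2)[OF q0 q] qnd_bounds(3)[OF q0 q]])
    qed
  next
    case 2
    show ?thesis
    proof (intro exI allI)
      fix n
      show "norm (Vf d e g x q n) \<le> 1 * inverse (norm q ^ (n*d))"
        using 2 qnd_bounds(3)[OF q0 q] by (simp add: Vf_def)
    qed
  next
    case 3
    let ?a = "(1 - ?X^(d-g+e)) / (1 - ?X^d)" and ?b = "(?X^(d-g+e) - ?X^d) / (1 - ?X^d)"
    show ?thesis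
    proof (intro exI allI)
      fix n
      have eq: "Vf d e g x q n = ?a + ?b * q^(n*d)" using 3 by (simp add: Vf_def Let_def mult_ac)
      show "norm (Vf d e g x q n) \<le> (norm ?a + norm ?b) * inverse (norm q ^ (n*d))"
        unfolding eq by (rule affine_bound[OF qnd_bounds(1)[OF q0 q] qnd_bounds(3)[OF q0 q]])
    qed
  qed
qed

lemma powi_bound:
  fixes q :: complex
  assumes q0: "q \<noteq> 0" and q: "norm q < 1" and z: "- int d \<le> z"
  shows "norm ((q::complex) powi (int n * z)) \<le> inverse (norm q ^ (n*d))"
proof -
  have r: "0 < norm q" "norm q \<le> 1" using q0 q by auto
  show ?thesis
  proof (cases "0 \<le> z")
    case True
    then obtain m where m: "z = int m" by (metis nonneg_int_cases)
    have "norm (q powi (int n * z)) = norm q ^ (n*m)" unfolding m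
      by (simp add: norm_power_int norm_power flip: of_nat_mult)
    also have "\<dots> \<le> 1" using r by (simp add: power_le_one)
    also have "\<dots> \<le> inverse (norm q ^ (n*d))" using inv_ge1[OF r] .
    finally show ?thesis .
  next
    case False
    then obtain m where m: "z = - int m" and md: "m \<le> d" using z
      by (metis le_minus_iff linorder_not_le neg_int_cases nat_int nat_le_iff of_nat_0_le_iff zle_int add.inverse_inverse)
    have "norm (q powi (int n * z)) = inverse (norm q ^ (n*m))" unfolding m
      by (simp add: norm_power_int norm_power power_int_minus norm_inverse flip: of_nat_mult)
    also have "\<dots> \<le> inverse (norm q ^ (n*d))"
    proof -
      have "norm q ^ (n*d) \<le> norm q ^ (n*m)" using r md by (intro power_decreasing) auto
      thus ?thesis using r by (intro le_imp_inverse_le) auto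
    qed
    finally show ?thesis .
  qed
qed

lemma gen_summable:
  fixes F :: "nat \<Rightarrow> complex"
  assumes q0: "q \<noteq> 0" and q: "norm q < 1" and x: "norm x \<le> 1" and d: "1 \<le> d"
    and bnd: "\<And>n. norm (F n) \<le> norm (Pn d k e x q n) * inverse (norm q^(n*d)) * (B * inverse (norm q^(n*d))) * inverse (norm q^(n*N))"
  shows "summable F"
proof -
  have s: "summable (\<lambda>n. B * (norm (Pn d k e x q n) * inverse (norm q ^ (n*(d+d+N)))))"
    by (rule summable_mult[OF Pn_dom_summable[OF q x d q0]])
  show ?thesis
  proof (rule summable_comparison_test'[OF s, where N=0])
    fix n
    have eq: "norm (Pn d k e x q n) * inverse (norm q^(n*d)) * (B * inverse (norm q^(n*d))) * inverse (norm q^(n*N))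
       = B * (norm (Pn d k e x q n) * inverse (norm q ^ (n*(d+d+N))))"
      unfolding add_mult_distrib2 power_add by (simp add: inverse_mult_distrib mult_ac)
    thus "norm (F n) \<le> B * (norm (Pn d k e x q n) * inverse (norm q ^ (n*(d+d+N))))"
      by (subst eq[symmetric]) (rule bnd)
  qed
qed

lemma alpha_summable:
  assumes q0: "q \<noteq> 0" and q: "norm q < 1" and x: "norm x \<le> 1" and d: "1 \<le> d"
    and ed: "e \<le> d"
  shows "summable (\<lambda>n. calpha d k e g x q n * inverse (q^(n*N)))"
proof -
  obtain B where B: "\<And>n. norm (Uf d e g x q n) \<le> B * inverse (norm q ^ (n*d))"
    using Uf_bound[OF q0 q] by blast
  have B0: "0 \<le> B" using B[of 0] by simp (meson norm_ge_zero order_trans)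
  show ?thesis
  proof (rule gen_summable[OF q0 q x d, where B = B and N = N])
    fix n
    have z: "- int d \<le> int g - int e" using ed by simp
    have "norm (calpha d k e g x q n * inverse (q^(n*N))) =
      norm (Pn d k e x q n) * norm (q powi (int n * (int g - int e))) * norm (Uf d e g x q n) * inverse (norm q^(n*N))"
      by (simp add: calpha_def norm_mult norm_inverse norm_power)
    also have "\<dots> \<le> norm (Pn d k e x q n) * inverse (norm q^(n*d)) * (B * inverse (norm q^(n*d))) * inverse (norm q^(n*N))"
      by (intro mult_mono mult_left_mono powi_bound[OF q0 q z] B order.refl) (use B0 in auto)
    finally show "norm (calpha d k e g x q n * inverse (q^(n*N))) \<le> norm (Pn d k e x q n) * inverse (norm q^(n*d)) * (B * inverse (norm q^(n*d))) * inverse (norm q^(n*N))" .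
  qed
qed

lemma beta_summable:
  assumes q0: "q \<noteq> 0" and q: "norm q < 1" and x: "norm x \<le> 1" and d: "1 \<le> d"
    and gd: "g \<le> d"
  shows "summable (\<lambda>n. cbeta d k e g x q n * (x*q^(n+1))^N)"
proof -
  obtain B where B: "\<And>n. norm (Vf d e g x q n) \<le> B * inverse (norm q ^ (n*d))"
    using Vf_bound[OF q0 q] by blast
  have B0: "0 \<le> B" using B[of 0] by simp (meson norm_ge_zero order_trans)
  show ?thesis
  proof (rule gen_summable[OF q0 q x d, where B = B and N = N])
    fix n
    have z: "- int d \<le> int e - int g" using gd by simp
    have r: "0 < norm q" "norm q \<le> 1" using q0 q by auto
    have w: "norm ((x*q^(n+1))^N) \<le> inverse (norm q^(n*N))"
    proof -
      have "norm (x*q^(n+1)) \<le> 1" using nxq[OF q x, of "n+1"] by simp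
      hence "norm ((x*q^(n+1))^N) \<le> 1" by (simp add: norm_power power_le_one)
      thus ?thesis using inv_ge1[OF r, of "n*N"] by linarith
    qed
    have "norm (cbeta d k e g x q n * (x*q^(n+1))^N) =
      norm (Pn d k e x q n) * norm (q powi (int n * (int e - int g))) * norm (Vf d e g x q n) * norm ((x*q^(n+1))^N)"
      by (simp add: cbeta_def norm_mult norm_minus_cancel)
    also have "\<dots> \<le> norm (Pn d k e x q n) * inverse (norm q^(n*d)) * (B * inverse (norm q^(n*d))) * inverse (norm q^(n*N))"
      by (intro mult_mono mult_left_mono powi_bound[OF q0 q z] B w order.refl) (use B0 in auto)
    finally show "norm (cbeta d k e g x q n * (x*q^(n+1))^N) \<le> norm (Pn d k e x q n) * inverse (norm q^(n*d)) * (B * inverse (norm q^(n*d))) * inverse (norm q^(n*N))" .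
  qed
qed

definition Phi :: "nat \<Rightarrow> complex \<Rightarrow> complex \<Rightarrow> nat \<Rightarrow> complex" where
  "Phi d X T m = 1 - X^m + T*X^m - T*X^d"

lemma Phi_step: "Phi d X T (Suc m) - X * Phi d X T m = (1-X)*(1-T*X^d)"
  by (simp add: Phi_def algebra_simps)

lemma Phi_diff: "Phi d X T (Suc m) - Phi d X T m = X^m*(1-X)*(1-T)"
  by (simp add: Phi_def algebra_simps)

lemma ab1: "(T::complex) \<noteq> 0 \<Longrightarrow> (c::complex) \<noteq> 0 \<Longrightarrow>
  (Y - Xd)/c + inverse T*(1-Y)/c = inverse T * (1 - Y + T*Y - T*Xd)/c"
  by (simp add: field_simps)
lemma ab2: "(c::complex) \<noteq> 0 \<Longrightarrow>
  (1-Y)/c + T*(Y-Xd)/c = (1 - Y + T*Y - T*Xd)/c"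
  by (simp add: field_simps)
lemma ab3: "(T::complex) \<noteq> 0 \<Longrightarrow> 1 - Xd \<noteq> 0 \<Longrightarrow> 1 = inverse T * (1 - 1 + T*1 - T*Xd)/(1-Xd)"
  by (simp add: right_diff_distrib mult.assoc[symmetric])
lemma ab4: "1 - (Xd::complex) \<noteq> 0 \<Longrightarrow> 1 = (1 - Xd + T*Xd - T*Xd)/(1-Xd)"
  by simp

lemma Vle:
  assumes "g \<le> e" "(x*q)^d \<noteq> 1" "q^(n*d) \<noteq> 0"
  shows "Vf d e g x q n = inverse (q^(n*d)) * Phi d (x*q) (q^(n*d)) (e-g) / (1 - (x*q)^d)"
proof (cases "g = e")
  case True
  have nz: "1 - (x*q)^d \<noteq> 0" using assms(2) by auto
  have eq: "Vf d e g x q n = 1" using True by (simp add: Vf_def)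
  show ?thesis unfolding eq Phi_def using True ab3[OF assms(3) nz] by simp
next
  case False
  have nz: "1 - (x*q)^d \<noteq> 0" using assms(2) by auto
  have eq: "Vf d e g x q n = ((x*q)^(e-g) - (x*q)^d)/(1-(x*q)^d) + inverse(q^(n*d))*(1-(x*q)^(e-g))/(1-(x*q)^d)"
    using False assms(1) by (simp add: Vf_def Let_def)
  show ?thesis unfolding eq Phi_def by (rule ab1[OF assms(3) nz])
qed

lemma Vge:
  assumes "e \<le> g" "(x*q)^d \<noteq> 1" "g \<le> d"
  shows "Vf d e g x q n = Phi d (x*q) (q^(n*d)) (d-g+e) / (1 - (x*q)^d)"
proof (cases "g = e")
  case True
  have nz: "1 - (x*q)^d \<noteq> 0" using assms(2) by auto
  have eq: "Vf d e g x q n = 1" using True by (simp add: Vf_def)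
  have m: "d-g+e = d" using True assms(3) by simp
  show ?thesis unfolding eq Phi_def m by (rule ab4[OF nz])
next
  case False
  have nz: "1 - (x*q)^d \<noteq> 0" using assms(2) by auto
  have eq: "Vf d e g x q n = (1-(x*q)^(d-g+e))/(1-(x*q)^d) + q^(n*d)*((x*q)^(d-g+e)-(x*q)^d)/(1-(x*q)^d)"
    using False assms(1) by (simp add: Vf_def Let_def)
  show ?thesis unfolding eq Phi_def by (rule ab2[OF nz])
qed

lemma Ule:
  assumes "g \<le> e" "(x*q)^d \<noteq> 1"
  shows "Uf d e g x q n = Phi d (x*q) (q^(n*d)) (d+g-e) / (1 - (x*q)^d)"
proof (cases "g = e")
  case True
  have nz: "1 - (x*q)^d \<noteq> 0" using assms(2) by auto
  have eq: "Uf d e g x q n = 1" using True by (simp add: Uf_def)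
  have m: "d+g-e = d" using True by simp
  show ?thesis unfolding eq Phi_def m by (rule ab4[OF nz])
next
  case False
  have nz: "1 - (x*q)^d \<noteq> 0" using assms(2) by auto
  have eq: "Uf d e g x q n = (1-(x*q)^(d+g-e))/(1-(x*q)^d) + q^(n*d)*((x*q)^(d+g-e)-(x*q)^d)/(1-(x*q)^d)"
    using False assms(1) by (simp add: Uf_def Let_def)
  show ?thesis unfolding eq Phi_def by (rule ab2[OF nz])
qed

lemma Uge:
  assumes "e \<le> g" "(x*q)^d \<noteq> 1" "q^(n*d) \<noteq> 0"
  shows "Uf d e g x q n = inverse (q^(n*d)) * Phi d (x*q) (q^(n*d)) (g-e) / (1 - (x*q)^d)"
proof (cases "g = e")
  case True
  have nz: "1 - (x*q)^d \<noteq> 0" using assms(2) by auto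
  have eq: "Uf d e g x q n = 1" using True by (simp add: Uf_def)
  show ?thesis unfolding eq Phi_def using True ab3[OF assms(3) nz] by simp
next
  case False
  have nz: "1 - (x*q)^d \<noteq> 0" using assms(2) by auto
  have eq: "Uf d e g x q n = ((x*q)^(g-e) - (x*q)^d)/(1-(x*q)^d) + inverse(q^(n*d))*(1-(x*q)^(g-e))/(1-(x*q)^d)"
    using False assms(1) by (simp add: Uf_def Let_def)
  show ?thesis unfolding eq Phi_def by (rule ab1[OF assms(3) nz])
qed

lemma alpha_form:
  assumes "q \<noteq> 0" "g \<le> e + M"
  shows "calpha d k e g x q n * inverse (q^(n*M)) = Pn d k e x q n * Uf d e g x q n * inverse ((q^n)^(e+M-g))"
proof -
  have "q^n \<noteq> 0" using assms by simp
  from powi_nat_inv[OF this assms(2)]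
  have h: "(q ^ n) powi (int g - int e) * inverse ((q ^ n) ^ M) = inverse ((q ^ n) ^ (e + M - g))" .
  have m: "q^(n*M) = (q^n)^M" by (simp add: power_mult)
  show ?thesis unfolding calpha_def powi_q m using h by (metis mult.assoc mult.commute)
qed

lemma beta_form:
  assumes "q \<noteq> 0" "g \<le> e + M"
  shows "cbeta d k e g x q n * (x*q^(n+1))^M = - Pn d k e x q n * Vf d e g x q n * (x*q)^M * (q^n)^(e+M-g)"
proof -
  have "q^n \<noteq> 0" using assms by simp
  from powi_nat[OF this assms(2)]
  have h: "(q ^ n) powi (int e - int g) * (q ^ n) ^ M = (q ^ n) ^ (e + M - g)" .
  have "(x*q^(n+1))^M = (x*q)^M * (q^n)^M" by (simp add: power_mult_distrib mult_ac)
  then show ?thesis unfolding cbeta_def powi_q using h by (simp add: mult_ac)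
qed

lemma core_a:
  fixes T c D1 D2 X W F1 F0 :: complex
  assumes "T \<noteq> 0" "c \<noteq> 0" "D1 \<noteq> 0" "D2 \<noteq> 0" "F1 = X*F0 + D2*D1"
  shows "c/(D1*D2) * (inverse T*F1/c * (W*T) - X*(inverse T*F0/c)*(W*T)) = W"
  using assms by (simp add: field_simps)

lemma core_b:
  fixes T c D1 D2 X W F1 F0 :: complex
  assumes "c \<noteq> 0" "D1 \<noteq> 0" "D2 \<noteq> 0" "F1 = X*F0 + D2*D1"
  shows "c/(D1*D2) * (F1/c * W - X*(F0/c)*W) = W"
  using assms by (simp add: field_simps)

lemma core_c:
  fixes T c D1 D2 X W F1 F0 :: complex
  assumes "T \<noteq> 0" "c \<noteq> 0" "D1 \<noteq> 0" "D2 \<noteq> 0" "F1 = X*F0 + D2*D1"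
  shows "c/(D1*D2) * (F1/c * W - X*(inverse T*F0/c)*(W*T)) = W"
  using assms by (simp add: field_simps)

lemma core2_a:
  fixes S c D1 D2 X Y XL V0 sE F1 F0 :: complex
  assumes "c \<noteq> 0" "D1 \<noteq> 0" "D2 \<noteq> 0" "sE \<noteq> 0" "F1 = F0 + Y*D2*D1"
  shows "c/(D1*D2) * (F1/c*inverse sE - F0/c*inverse sE) * XL * (sE*V0) = Y*XL*V0"
  using assms by (simp add: field_simps)

lemma core2_b:
  fixes S c D1 D2 X Y XL V0 sE F1 F0 :: complex
  assumes "c \<noteq> 0" "D1 \<noteq> 0" "D2 \<noteq> 0" "sE \<noteq> 0" "S \<noteq> 0" "F1 = F0 + Y*D2*D1"
  shows "c/(D1*D2) * (inverse S*F1/c*inverse sE - inverse S*F0/c*inverse sE) * XL * (sE*S*V0) = Y*XL*V0"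
  using assms by (simp add: field_simps)

lemma core2_c:
  fixes S c D1 D2 X Y XL V0 sE F1 F0 :: complex
  assumes "c \<noteq> 0" "D1 \<noteq> 0" "D2 \<noteq> 0" "sE \<noteq> 0" "S \<noteq> 0" "F1 = F0 + Y*D2*D1"
  shows "c/(D1*D2) * (F1/c*inverse (sE*S) - inverse S*F0/c*inverse sE) * XL * (sE*S*V0) = Y*XL*V0"
  using assms by (simp add: field_simps)

lemma resid_cases:
  assumes "1 \<le> d" "1 \<le> f" "f \<le> d" "1 \<le> a"
  shows "resid d (d*a+f-1) = (if f = 1 then d else f - 1)"
proof (cases "f = 1")
  case True
  then show ?thesis by (simp add: resid_def)
next
  case False
  hence "d*a+f-1 = (f-1) + d*a" and "f - 1 < d" using assms by auto
  hence "(d*a+f-1) mod d = f - 1" by simp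
  then show ?thesis using False assms by (simp add: resid_def)
qed

lemma resid_N:
  assumes "1 \<le> d" "1 \<le> f" "f \<le> d"
  shows "resid d (d*a+f) = f"
proof (cases "f = d")
  case True
  then show ?thesis by (simp add: resid_def)
next
  case False
  hence "(d*a+f) mod d = f" using assms by simp
  then show ?thesis using False assms by (simp add: resid_def)
qed

lemma basic_nz:
  fixes q x :: complex
  assumes q0: "q \<noteq> 0" and q: "norm q < 1" and x: "norm x \<le> 1" and d: "1 \<le> d"
  shows "(x*q)^d \<noteq> 1" "1 - x*q \<noteq> 0" "1 - (x*q)^d * q^(m*d) \<noteq> 0" "1 - (x*q)^d \<noteq> 0"
    "1 - q^(Suc m*d) \<noteq> 0" "q^m \<noteq> 0"
proof -
  have X: "norm (x*q) < 1" using nxq[OF q x, of 1] by simp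
  have Xd: "norm ((x*q)^d) < 1" using pow_lt1[OF X d] .
  show "(x*q)^d \<noteq> 1" "1 - (x*q)^d \<noteq> 0" using Xd by auto
  show "1 - x*q \<noteq> 0" using X by auto
  have "norm (q^(m*d)) \<le> 1" using q by (simp add: norm_power power_le_one)
  hence "norm ((x*q)^d) * norm (q^(m*d)) \<le> norm ((x*q)^d)" by (intro mult_left_le) auto
  hence "norm ((x*q)^d * q^(m*d)) < 1" using Xd unfolding norm_mult by linarith
  thus "1 - (x*q)^d * q^(m*d) \<noteq> 0" by auto
  show "q^m \<noteq> 0" using q0 by simp
  have "norm (q^(Suc m*d)) < 1" using nq[OF q, of "Suc m*d"] d by simp
  then show "1 - q^(Suc m*d) \<noteq> 0" by auto
qed

lemma core1_i:
  fixes q x :: complex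
  assumes q0: "q \<noteq> 0" and q: "norm q < 1" and x: "norm x \<le> 1" and d: "1 \<le> d"
    and a: "1 \<le> a" "a \<le> k" and f: "2 \<le> f" "f \<le> e" and e: "e \<le> d"
  shows "(1-(x*q)^d)/((1-(x*q)^d*q^(n*d))*(1-x*q)) * (Vf d e (f-1) x q n * (q^n)^(e+(d*a+f-1)-(f-1))
     - (x*q) * Vf d e f x q n * (q^n)^(e+(d*a+f)-f)) = (q^n)^(d*k+e) * inverse((q^n)^(d*k-d*a+d))"
proof -
  have nz: "(x*q)^d \<noteq> 1" "1 - x*q \<noteq> 0" "1 - (x*q)^d * q^(n*d) \<noteq> 0" "1 - (x*q)^d \<noteq> 0"
    "q^n \<noteq> 0" "q^(n*d) \<noteq> 0"
    using basic_nz(1,2,4)[OF q0 q x d] basic_nz(3)[OF q0 q x d, of n] basic_nz(6)[OF q0 q x d, of n] q0 by auto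
  let ?T = "q^(n*d)" and ?c = "1-(x*q)^d" and ?X = "x*q"
  have V1: "Vf d e (f-1) x q n = inverse ?T * Phi d ?X ?T (Suc (e-f)) / ?c"
  proof -
    have "e - (f-1) = Suc (e-f)" using f by simp
    thus ?thesis using Vle[of "f-1" e x q d n] nz f by simp
  qed
  have V0: "Vf d e f x q n = inverse ?T * Phi d ?X ?T (e-f) / ?c" using Vle[of f e x q d n] nz f by simp
  have da: "d \<le> d*a" using a by simp
  have ex1: "e+(d*a+f-1)-(f-1) = (e+d*a-d) + d" using f da by arith
  have ex2: "e+(d*a+f)-f = (e+d*a-d) + d" using ex1 f by simp
  have tE: "(q^n)^((e+d*a-d) + d) = (q^n)^(e+d*a-d) * ?T" by (simp add: power_add power_mult)
  have R: "(q^n)^(d*k+e) * inverse((q^n)^(d*k-d*a+d)) = (q^n)^(e+d*a-d)"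
  proof -
    have "d*a \<le> d*k" using a by simp
    hence h: "d*k+e = (d*k-d*a+d) + (e+d*a-d)" using da by arith
    have "(q^n)^(d*k+e) = (q^n)^(d*k-d*a+d) * (q^n)^(e+d*a-d)" unfolding power_add[symmetric] h[symmetric] ..
    thus ?thesis using nz by simp
  qed
  have st: "Phi d ?X ?T (Suc (e-f)) = ?X * Phi d ?X ?T (e-f) + (1-?X)*(1-?X^d*?T)"
    using Phi_step[of d ?X ?T "e-f"] by (simp add: algebra_simps)
  have key: "?c/((1-?X^d*?T)*(1-?X)) * (inverse ?T*Phi d ?X ?T (Suc (e-f))/?c * ((q^n)^(e+d*a-d)*?T)
      - ?X*(inverse ?T*Phi d ?X ?T (e-f)/?c)*((q^n)^(e+d*a-d)*?T)) = (q^n)^(e+d*a-d)"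
    by (rule core_a[OF nz(6) nz(4) nz(3) nz(2) st])
  show ?thesis unfolding V1 V0 ex1 ex2 tE R using key by (simp add: mult_ac)
qed

lemma nz_facts:
  fixes q x :: complex
  assumes q0: "q \<noteq> 0" and q: "norm q < 1" and x: "norm x \<le> 1" and d: "1 \<le> d"
  shows "(x*q)^d \<noteq> 1" "1 - x*q \<noteq> 0" "1 - (x*q)^d * q^(n*d) \<noteq> 0" "1 - (x*q)^d \<noteq> 0"
    "q^n \<noteq> 0" "q^(n*d) \<noteq> 0" "1 - q^(Suc n*d) \<noteq> 0"
  using basic_nz(1,2,4)[OF q0 q x d] basic_nz(3)[OF q0 q x d, of n] basic_nz(6)[OF q0 q x d, of n]
    basic_nz(5)[OF q0 q x d, of n] q0 by auto

lemma pow_split: "m = a + b \<Longrightarrow> (z::complex)^m = z^a * z^b"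
  by (simp add: power_add)

lemma core1_ii:
  fixes q x :: complex
  assumes q0: "q \<noteq> 0" and q: "norm q < 1" and x: "norm x \<le> 1" and d: "1 \<le> d"
    and a: "1 \<le> a" "a \<le> k" and f: "2 \<le> f" "e < f" "f \<le> d"
  shows "(1-(x*q)^d)/((1-(x*q)^d*q^(n*d))*(1-x*q)) * (Vf d e (f-1) x q n * (q^n)^(e+(d*a+f-1)-(f-1))
     - (x*q) * Vf d e f x q n * (q^n)^(e+(d*a+f)-f)) = (q^n)^(d*k+e) * inverse((q^n)^(d*k-d*a))"
proof -
  note nz = nz_facts[OF q0 q x d]
  let ?T = "q^(n*d)" and ?c = "1-(x*q)^d" and ?X = "x*q"
  have V1: "Vf d e (f-1) x q n = Phi d ?X ?T (Suc (d-f+e)) / ?c"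
  proof -
    have "d - (f-1) + e = Suc (d-f+e)" using f by simp
    thus ?thesis using Vge[of e "f-1" x q d n] nz f by simp
  qed
  have V0: "Vf d e f x q n = Phi d ?X ?T (d-f+e) / ?c" using Vge[of e f x q d n] nz f by simp
  have ex1: "e+(d*a+f-1)-(f-1) = e+d*a" using f by arith
  have ex2: "e+(d*a+f)-f = e+d*a" by simp
  have R: "(q^n)^(d*k+e) * inverse((q^n)^(d*k-d*a)) = (q^n)^(e+d*a)"
  proof -
    have "d*a \<le> d*k" using a by simp
    hence h: "d*k+e = (d*k-d*a) + (e+d*a)" by arith
    have "(q^n)^(d*k+e) = (q^n)^(d*k-d*a) * (q^n)^(e+d*a)" by (rule pow_split[OF h])
    thus ?thesis using nz by simp
  qed
  have st: "Phi d ?X ?T (Suc (d-f+e)) = ?X * Phi d ?X ?T (d-f+e) + (1-?X)*(1-?X^d*?T)"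
    using Phi_step[of d ?X ?T "d-f+e"] by (simp add: algebra_simps)
  have key: "?c/((1-?X^d*?T)*(1-?X)) * (Phi d ?X ?T (Suc (d-f+e))/?c * (q^n)^(e+d*a)
      - ?X*(Phi d ?X ?T (d-f+e)/?c)*(q^n)^(e+d*a)) = (q^n)^(e+d*a)"
    by (rule core_b[OF nz(4) nz(3) nz(2) st])
  show ?thesis unfolding V1 V0 ex1 ex2 R using key by (simp add: mult_ac)
qed

lemma core1_iii:
  fixes q x :: complex
  assumes q0: "q \<noteq> 0" and q: "norm q < 1" and x: "norm x \<le> 1" and d: "1 \<le> d"
    and a: "1 \<le> a" "a \<le> k" and e: "1 \<le> e" "e \<le> d"
  shows "(1-(x*q)^d)/((1-(x*q)^d*q^(n*d))*(1-x*q)) * (Vf d e d x q n * (q^n)^(e+(d*a+1-1)-d)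
     - (x*q) * Vf d e 1 x q n * (q^n)^(e+(d*a+1)-1)) = (q^n)^(d*k+e) * inverse((q^n)^(d*k-d*a+d))"
proof -
  note nz = nz_facts[OF q0 q x d]
  let ?T = "q^(n*d)" and ?c = "1-(x*q)^d" and ?X = "x*q"
  have V1: "Vf d e d x q n = Phi d ?X ?T (Suc (e-1)) / ?c"
  proof -
    have "d - d + e = Suc (e-1)" using e by simp
    thus ?thesis using Vge[of e d x q d n] nz e by simp
  qed
  have V0: "Vf d e 1 x q n = inverse ?T * Phi d ?X ?T (e-1) / ?c" using Vle[of 1 e x q d n] nz e by simp
  have da: "d \<le> d*a" using a by simp
  have ex1: "e+(d*a+1-1)-d = e+d*a-d" by simp
  have ex2: "e+(d*a+1)-1 = (e+d*a-d) + d" using da by arith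
  have tE: "(q^n)^((e+d*a-d) + d) = (q^n)^(e+d*a-d) * ?T" by (simp add: power_add power_mult)
  have R: "(q^n)^(d*k+e) * inverse((q^n)^(d*k-d*a+d)) = (q^n)^(e+d*a-d)"
  proof -
    have "d*a \<le> d*k" using a by simp
    hence h: "d*k+e = (d*k-d*a+d) + (e+d*a-d)" using da by arith
    have "(q^n)^(d*k+e) = (q^n)^(d*k-d*a+d) * (q^n)^(e+d*a-d)" by (rule pow_split[OF h])
    thus ?thesis using nz by simp
  qed
  have st: "Phi d ?X ?T (Suc (e-1)) = ?X * Phi d ?X ?T (e-1) + (1-?X)*(1-?X^d*?T)"
    using Phi_step[of d ?X ?T "e-1"] by (simp add: algebra_simps)
  have key: "?c/((1-?X^d*?T)*(1-?X)) * (Phi d ?X ?T (Suc (e-1))/?c * (q^n)^(e+d*a-d)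
      - ?X*(inverse ?T*Phi d ?X ?T (e-1)/?c)*((q^n)^(e+d*a-d)*?T)) = (q^n)^(e+d*a-d)"
    by (rule core_c[OF nz(6) nz(4) nz(3) nz(2) st])
  show ?thesis unfolding V1 V0 ex1 ex2 tE R using key by (simp add: mult_ac)
qed

lemma core2_i:
  fixes q x :: complex
  assumes q0: "q \<noteq> 0" and q: "norm q < 1" and x: "norm x \<le> 1" and d: "1 \<le> d"
    and a: "1 \<le> a" "a \<le> k" and f: "2 \<le> f" "f \<le> e" and e: "e \<le> d"
  shows "(1-(x*q)^d)/((1-q^(Suc n*d))*(1-x*q)) * (Uf d e f x q (Suc n) * inverse((q^Suc n)^(e+(d*a+f)-f))
     - Uf d e (f-1) x q (Suc n) * inverse((q^Suc n)^(e+(d*a+f-1)-(f-1)))) * (x*q)^(d*k+e) * (q^Suc n)^(d*k+e+d)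
     = (x*q)^(d*a+f-1) * (x*q)^(d*k-d*a+d) * (q^Suc n)^(d*k-d*a+d)"
proof -
  note nz = nz_facts[OF q0 q x d]
  let ?S = "q^(Suc n*d)" and ?c = "1-(x*q)^d" and ?X = "x*q" and ?s = "q^Suc n"
  let ?m = "d+(f-1)-e"
  have U1: "Uf d e f x q (Suc n) = Phi d ?X ?S (Suc ?m) / ?c"
  proof -
    have "d + f - e = Suc ?m" using f e by simp
    thus ?thesis using Ule[of f e x q d "Suc n"] nz f q0 by simp
  qed
  have U0: "Uf d e (f-1) x q (Suc n) = Phi d ?X ?S ?m / ?c" using Ule[of "f-1" e x q d "Suc n"] nz f q0 by simp
  have da: "d \<le> d*a" and dk: "d*a \<le> d*k" using a by simp_all
  have ex1: "e+(d*a+f)-f = e+d*a" by simp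
  have ex2: "e+(d*a+f-1)-(f-1) = e+d*a" using f by arith
  have sp: "?s^(d*k+e+d) = ?s^(e+d*a) * ?s^(d*k-d*a+d)" by (rule pow_split) (use dk in arith)
  have xp: "(x*q)^(d*a+f-1) * (x*q)^(d*k-d*a+d) = ?X^?m * ?X^(d*k+e)"
    unfolding power_add[symmetric] by (rule arg_cong[where f="\<lambda>m. ?X^m"]) (use dk f e in arith)
  have st: "Phi d ?X ?S (Suc ?m) = Phi d ?X ?S ?m + ?X^?m*(1-?X)*(1-?S)"
    using Phi_diff[of d ?X ?S ?m] by (simp add: algebra_simps)
  have sE: "?s^(e+d*a) \<noteq> 0" using q0 by simp
  have key: "?c/((1-?S)*(1-?X)) * (Phi d ?X ?S (Suc ?m)/?c*inverse (?s^(e+d*a)) - Phi d ?X ?S ?m/?c*inverse (?s^(e+d*a)))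
      * ?X^(d*k+e) * (?s^(e+d*a)*?s^(d*k-d*a+d)) = ?X^?m*?X^(d*k+e)*?s^(d*k-d*a+d)"
    by (rule core2_a[OF nz(4) nz(7) nz(2) sE st])
  show ?thesis unfolding U1 U0 ex1 ex2 sp xp using key by (simp add: mult_ac)
qed

lemma core2_ii:
  fixes q x :: complex
  assumes q0: "q \<noteq> 0" and q: "norm q < 1" and x: "norm x \<le> 1" and d: "1 \<le> d"
    and a: "1 \<le> a" "a \<le> k" and f: "2 \<le> f" "e < f" "f \<le> d"
  shows "(1-(x*q)^d)/((1-q^(Suc n*d))*(1-x*q)) * (Uf d e f x q (Suc n) * inverse((q^Suc n)^(e+(d*a+f)-f))
     - Uf d e (f-1) x q (Suc n) * inverse((q^Suc n)^(e+(d*a+f-1)-(f-1)))) * (x*q)^(d*k+e) * (q^Suc n)^(d*k+e+d)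
     = (x*q)^(d*a+f-1) * (x*q)^(d*k-d*a) * (q^Suc n)^(d*k-d*a)"
proof -
  note nz = nz_facts[OF q0 q x d]
  let ?S = "q^(Suc n*d)" and ?c = "1-(x*q)^d" and ?X = "x*q" and ?s = "q^Suc n"
  let ?m = "f-1-e"
  have Sd: "?s^d = ?S" by (rule power_mult[symmetric])
  have U1: "Uf d e f x q (Suc n) = inverse ?S * Phi d ?X ?S (Suc ?m) / ?c"
  proof -
    have "f - e = Suc ?m" using f by simp
    thus ?thesis using Uge[of e f x q d "Suc n"] nz f q0 by simp
  qed
  have U0: "Uf d e (f-1) x q (Suc n) = inverse ?S * Phi d ?X ?S ?m / ?c" using Uge[of e "f-1" x q d "Suc n"] nz f q0 by simp
  have da: "d \<le> d*a" and dk: "d*a \<le> d*k" using a by simp_all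
  have ex1: "e+(d*a+f)-f = e+d*a" by simp
  have ex2: "e+(d*a+f-1)-(f-1) = e+d*a" using f by arith
  have sp: "?s^(d*k+e+d) = ?s^(e+d*a) * ?S * ?s^(d*k-d*a)"
  proof -
    have "?s^(d*k+e+d) = ?s^(e+d*a) * ?s^d * ?s^(d*k-d*a)"
      unfolding power_add[symmetric] by (rule arg_cong[where f="\<lambda>m. ?s^m"]) (use dk in arith)
    thus ?thesis unfolding Sd .
  qed
  have xp: "(x*q)^(d*a+f-1) * (x*q)^(d*k-d*a) = ?X^?m * ?X^(d*k+e)"
    unfolding power_add[symmetric] by (rule arg_cong[where f="\<lambda>m. ?X^m"]) (use dk f in arith)
  have st: "Phi d ?X ?S (Suc ?m) = Phi d ?X ?S ?m + ?X^?m*(1-?X)*(1-?S)"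
    using Phi_diff[of d ?X ?S ?m] by (simp add: algebra_simps)
  have sE: "?s^(e+d*a) \<noteq> 0" using q0 by simp
  have S0: "?S \<noteq> 0" using q0 by simp
  have key: "?c/((1-?S)*(1-?X)) * (inverse ?S*Phi d ?X ?S (Suc ?m)/?c*inverse (?s^(e+d*a)) - inverse ?S*Phi d ?X ?S ?m/?c*inverse (?s^(e+d*a)))
      * ?X^(d*k+e) * (?s^(e+d*a)*?S*?s^(d*k-d*a)) = ?X^?m*?X^(d*k+e)*?s^(d*k-d*a)"
    by (rule core2_b[OF nz(4) nz(7) nz(2) sE S0 st])
  show ?thesis unfolding U1 U0 ex1 ex2 sp xp using key by (simp add: mult_ac)
qed

lemma core2_iii:
  fixes q x :: complex
  assumes q0: "q \<noteq> 0" and q: "norm q < 1" and x: "norm x \<le> 1" and d: "1 \<le> d"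
    and a: "1 \<le> a" "a \<le> k" and e: "1 \<le> e" "e \<le> d"
  shows "(1-(x*q)^d)/((1-q^(Suc n*d))*(1-x*q)) * (Uf d e 1 x q (Suc n) * inverse((q^Suc n)^(e+(d*a+1)-1))
     - Uf d e d x q (Suc n) * inverse((q^Suc n)^(e+(d*a+1-1)-d))) * (x*q)^(d*k+e) * (q^Suc n)^(d*k+e+d)
     = (x*q)^(d*a+1-1) * (x*q)^(d*k-d*a+d) * (q^Suc n)^(d*k-d*a+d)"
proof -
  note nz = nz_facts[OF q0 q x d]
  let ?S = "q^(Suc n*d)" and ?c = "1-(x*q)^d" and ?X = "x*q" and ?s = "q^Suc n"
  let ?m = "d-e"
  have Sd: "?s^d = ?S" by (rule power_mult[symmetric])
  have U1: "Uf d e 1 x q (Suc n) = Phi d ?X ?S (Suc ?m) / ?c"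
  proof -
    have "d + 1 - e = Suc ?m" using e by simp
    thus ?thesis using Ule[of 1 e x q d "Suc n"] nz e q0 by simp
  qed
  have U0: "Uf d e d x q (Suc n) = inverse ?S * Phi d ?X ?S ?m / ?c" using Uge[of e d x q d "Suc n"] nz e q0 by simp
  have da: "d \<le> d*a" and dk: "d*a \<le> d*k" using a by simp_all
  have ex1: "e+(d*a+1)-1 = e+d*a" by simp
  have ex2: "e+(d*a+1-1)-d = e+d*a-d" by simp
  have sE1: "?s^(e+d*a) = ?s^(e+d*a-d) * ?S"
  proof -
    have "?s^(e+d*a) = ?s^(e+d*a-d) * ?s^d" by (rule pow_split) (use da in arith)
    thus ?thesis unfolding Sd .
  qed
  have sp: "?s^(d*k+e+d) = ?s^(e+d*a-d) * ?S * ?s^(d*k-d*a+d)"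
  proof -
    have "?s^(d*k+e+d) = ?s^(e+d*a-d) * ?s^d * ?s^(d*k-d*a+d)"
      unfolding power_add[symmetric] by (rule arg_cong[where f="\<lambda>m. ?s^m"]) (use dk da in arith)
    thus ?thesis unfolding Sd .
  qed
  have xp: "(x*q)^(d*a+1-1) * (x*q)^(d*k-d*a+d) = ?X^?m * ?X^(d*k+e)"
    unfolding power_add[symmetric] by (rule arg_cong[where f="\<lambda>m. ?X^m"]) (use dk e in arith)
  have st: "Phi d ?X ?S (Suc ?m) = Phi d ?X ?S ?m + ?X^?m*(1-?X)*(1-?S)"
    using Phi_diff[of d ?X ?S ?m] by (simp add: algebra_simps)
  have sE: "?s^(e+d*a-d) \<noteq> 0" using q0 by simp
  have S0: "?S \<noteq> 0" using q0 by simp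
  have key: "?c/((1-?S)*(1-?X)) * (Phi d ?X ?S (Suc ?m)/?c*inverse (?s^(e+d*a-d)*?S) - inverse ?S*Phi d ?X ?S ?m/?c*inverse (?s^(e+d*a-d)))
      * ?X^(d*k+e) * (?s^(e+d*a-d)*?S*?s^(d*k-d*a+d)) = ?X^?m*?X^(d*k+e)*?s^(d*k-d*a+d)"
    by (rule core2_c[OF nz(4) nz(7) nz(2) sE S0 st])
  show ?thesis unfolding U1 U0 ex1 ex2 sE1 sp xp using key by (simp add: mult_ac)
qed

lemma alg_beta:
  fixes Pn p P0 K V V' X Z tE tE' R :: complex
  assumes "Pn = p*P0*K" "P0*(V'*tE' - X*V*tE) = R"
  shows "-Pn*V*(Z*X)*tE - (-Pn*V'*Z*tE') = Z*(p*R*K)"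
  by (simp add: assms(1) assms(2)[symmetric] algebra_simps)

lemma alg_alpha:
  fixes PS p P0 K XL tL uLd A1 A2 B1 B2 Z XNt uNt :: complex
  assumes "PS = p*(-(XL*tL*uLd))*P0*K" "P0*(A1*A2 - B1*B2)*XL*uLd = Z*XNt*uNt"
  shows "Z*(-(p*tL*K)*(XNt*uNt)) = PS*A1*A2 - PS*B1*B2"
proof -
  have "PS*A1*A2 - PS*B1*B2 = -(p*tL*K) * (P0*(A1*A2 - B1*B2)*XL*uLd)" using assms(1) by (simp add: algebra_simps)
  also have "\<dots> = -(p*tL*K) * (Z*XNt*uNt)" using assms(2) by simp
  finally show ?thesis by (simp add: algebra_simps)
qed

lemma Pn_eq2:
  fixes q x :: complex
  assumes q: "norm q < 1" and x: "norm x \<le> 1" and d: "1 \<le> d"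
  shows "Pn d k e x q n = pref d k e x q n * ((1-(x*q)^d)/((1-(x*q)^d*q^(n*d))*(1-x*q))) * Kf d x q n"
proof -
  have h: "x*q^(n+1) = (x*q)*q^n" by (simp add: mult_ac)
  have "(x*q^(n+1))^d = (x*q)^d*(q^n)^d" unfolding h by (rule power_mult_distrib)
  hence "(x*q^(n+1))^d = (x*q)^d*q^(n*d)" by (simp add: power_mult)
  thus ?thesis unfolding Pn_eq[OF q x d] by simp
qed

lemma A1:
  fixes q x :: complex
  assumes q0: "q \<noteq> 0" and q: "norm q < 1" and x: "norm x \<le> 1" and d: "1 \<le> d"
    and a: "1 \<le> a" "a \<le> k" and f: "1 \<le> f" "f \<le> d" and e: "1 \<le> e" "e \<le> d"
    and f': "f' = (if f = 1 then d else f - 1)"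
    and Nt: "Nt = (if f \<le> e then d*k-d*a+d else d*k-d*a)"
  shows "cbeta d k e f x q n * (x*q^(n+1))^(d*a+f) - cbeta d k e f' x q n * (x*q^(n+1))^(d*a+f-1)
    = (x*q)^(d*a+f-1) * (talpha d k e (x*q) q n * inverse (q^(n*Nt)))"
proof -
  let ?P0 = "(1-(x*q)^d)/((1-(x*q)^d*q^(n*d))*(1-x*q))"
  have core: "?P0 * (Vf d e f' x q n * (q^n)^(e+(d*a+f-1)-f') - (x*q) * Vf d e f x q n * (q^n)^(e+(d*a+f)-f))
     = (q^n)^(d*k+e) * inverse((q^n)^Nt)"
  proof -
    consider "f = 1" | "2 \<le> f" "f \<le> e" | "2 \<le> f" "e < f" using f by linarith
    then show ?thesis
    proof cases
      case 1
      show ?thesis using core1_iii[OF q0 q x d a e, of n] 1 e unfolding f' Nt by simp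
    next
      case 2
      show ?thesis using core1_i[OF q0 q x d a 2 e(2), of n] 2 unfolding f' Nt by simp
    next
      case 3
      show ?thesis using core1_ii[OF q0 q x d a 3 f(2), of n] 3 unfolding f' Nt by simp
    qed
  qed
  have da: "d \<le> d*a" using a by simp
  have f'd: "f' \<le> d" using f' f by auto
  have b1: "cbeta d k e f x q n * (x*q^(n+1))^(d*a+f) = - Pn d k e x q n * Vf d e f x q n * (x*q)^(d*a+f) * (q^n)^(e+(d*a+f)-f)"
    by (rule beta_form[OF q0]) (use f da in arith)
  have b2: "cbeta d k e f' x q n * (x*q^(n+1))^(d*a+f-1) = - Pn d k e x q n * Vf d e f' x q n * (x*q)^(d*a+f-1) * (q^n)^(e+(d*a+f-1)-f')"
    by (rule beta_form[OF q0]) (use f da f'd in arith)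
  have XN: "(x*q)^(d*a+f) = (x*q)^(d*a+f-1) * (x*q)"
    using f by (metis Suc_diff_1 add_gr_0 less_le_trans power_Suc2 zero_less_one)
  have ta: "talpha d k e (x*q) q n * inverse (q^(n*Nt)) = pref d k e x q n * ((q^n)^(d*k+e) * inverse((q^n)^Nt)) * Kf d x q n"
  proof -
    have "q^(n*Nt) = (q^n)^Nt" by (rule power_mult)
    thus ?thesis unfolding talpha_eq by (simp add: mult_ac)
  qed
  show ?thesis unfolding b1 b2 XN ta
    by (rule alg_beta[OF Pn_eq2[OF q x d] core])
qed

lemma A2:
  fixes q x :: complex
  assumes q0: "q \<noteq> 0" and q: "norm q < 1" and x: "norm x \<le> 1" and d: "1 \<le> d"
    and a: "1 \<le> a" "a \<le> k" and f: "1 \<le> f" "f \<le> d" and e: "1 \<le> e" "e \<le> d"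
    and f': "f' = (if f = 1 then d else f - 1)"
    and Nt: "Nt = (if f \<le> e then d*k-d*a+d else d*k-d*a)"
  shows "(x*q)^(d*a+f-1) * (tbeta d k e (x*q) q n * (x*q*q^(n+1))^Nt)
    = calpha d k e f x q (Suc n) * inverse (q^(Suc n*(d*a+f))) - calpha d k e f' x q (Suc n) * inverse (q^(Suc n*(d*a+f-1)))"
proof -
  let ?P0 = "(1-(x*q)^d)/((1-q^(Suc n*d))*(1-x*q))"
  have core: "?P0 * (Uf d e f x q (Suc n) * inverse((q^Suc n)^(e+(d*a+f)-f))
     - Uf d e f' x q (Suc n) * inverse((q^Suc n)^(e+(d*a+f-1)-f'))) * (x*q)^(d*k+e) * (q^Suc n)^(d*k+e+d)
     = (x*q)^(d*a+f-1) * (x*q)^Nt * (q^Suc n)^Nt"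
  proof -
    consider "f = 1" | "2 \<le> f" "f \<le> e" | "2 \<le> f" "e < f" using f by linarith
    then show ?thesis
    proof cases
      case 1
      show ?thesis using core2_iii[OF q0 q x d a e, of n] 1 e unfolding f' Nt by simp
    next
      case 2
      show ?thesis using core2_i[OF q0 q x d a 2 e(2), of n] 2 unfolding f' Nt by simp
    next
      case 3
      show ?thesis using core2_ii[OF q0 q x d a 3 f(2), of n] 3 unfolding f' Nt by simp
    qed
  qed
  have da: "d \<le> d*a" using a by simp
  have f'd: "f' \<le> d" using f' f by auto
  have a1: "calpha d k e f x q (Suc n) * inverse (q^(Suc n*(d*a+f))) = Pn d k e x q (Suc n) * Uf d e f x q (Suc n) * inverse((q^Suc n)^(e+(d*a+f)-f))"
    by (rule alpha_form[OF q0]) (use f da in arith)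
  have a2: "calpha d k e f' x q (Suc n) * inverse (q^(Suc n*(d*a+f-1))) = Pn d k e x q (Suc n) * Uf d e f' x q (Suc n) * inverse((q^Suc n)^(e+(d*a+f-1)-f'))"
    by (rule alpha_form[OF q0]) (use f da f'd in arith)
  have xs: "x^(d*k+e) * q^((2*d*k+2*e+d)*(n+1)) = (x*q)^(d*k+e) * (q^n)^(d*k+e) * (q^Suc n)^(d*k+e+d)"
  proof -
    have "q^((2*d*k+2*e+d)*(n+1)) = (q^Suc n)^(d*k+e) * (q^Suc n)^(d*k+e+d)"
      unfolding power_add[symmetric] power_mult[symmetric] by (rule arg_cong[where f="\<lambda>m. q^m"]) (simp add: algebra_simps)
    moreover have "x^(d*k+e) * (q^Suc n)^(d*k+e) = (x*q)^(d*k+e) * (q^n)^(d*k+e)"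
      by (simp add: power_mult_distrib[symmetric] mult_ac)
    ultimately show ?thesis by (simp add: mult_ac)
  qed
  have PS: "Pn d k e x q (Suc n) = pref d k e x q n * (-((x*q)^(d*k+e) * (q^n)^(d*k+e) * (q^Suc n)^(d*k+e+d))) * ?P0 * Kf d x q n"
  proof -
    have h: "q^(d*(n+1)) = q^(Suc n*d)" by (simp add: mult.commute)
    show ?thesis unfolding Pn_Suc_eq[OF q x d] h
      using xs by (simp add: mult_ac)
  qed
  have tb: "tbeta d k e (x*q) q n * (x*q*q^(n+1))^Nt = -(pref d k e x q n * (q^n)^(d*k+e) * Kf d x q n) * ((x*q)^Nt * (q^Suc n)^Nt)"
    unfolding tbeta_def talpha_eq by (simp add: power_mult_distrib)
  show ?thesis unfolding a1 a2 tb
    by (rule alg_alpha[OF PS core])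
qed

lemma Uf0:
  fixes q x :: complex
  assumes "(x*q)^d \<noteq> 1"
  shows "Uf d e g x q 0 = 1"
proof -
  have c: "1 - (x*q)^d \<noteq> 0" using assms by auto
  show ?thesis
  proof (cases "g \<le> e")
    case True
    show ?thesis using Ule[OF True assms, of 0] c by (simp add: Phi_def)
  next
    case False
    show ?thesis using Uge[of e g x q d 0] False assms c by (simp add: Phi_def)
  qed
qed

lemma A0:
  fixes q x :: complex
  assumes "(x*q)^d \<noteq> 1"
  shows "calpha d k e f x q 0 * inverse (q^(0*M)) - calpha d k e f' x q 0 * inverse (q^(0*M')) = 0"
  using Uf0[OF assms] by (simp add: calpha_def)

theorem mainTheorem6:
  fixes a k d e f :: nat and x q :: complex
  assumes "1 \<le> a" "a \<le> k" "1 \<le> d" "d \<le> k" "1 \<le> f" "f \<le> d"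
    and "e = d \<or> 2 * e = d"
    and "q \<noteq> 0" "norm q < 1" "norm x \<le> 1"
  shows "Cfun d k e (d*a+f) x q - Cfun d k e (d*a+f-1) x q =
    (if f \<le> e then (x*q)^(d*a+f-1) * Tfun d k e (d*k-d*a+d) (x*q) q
     else (x*q)^(d*a+f-1) * Tfun d k e (d*k-d*a) (x*q) q)"
proof -
  note a = assms(1,2) and d = assms(3) and f = assms(5,6) and q0 = assms(8) and q = assms(9) and x = assms(10)
  have e: "1 \<le> e" "e \<le> d" using assms(7) d by auto
  define f' where "f' = (if f = 1 then d else f - 1)"
  define Nt where "Nt = (if f \<le> e then d*k-d*a+d else d*k-d*a)"
  have f'd: "f' \<le> d" using f d unfolding f'_def by auto
  have rN: "resid d (d*a+f) = f" by (rule resid_N[OF d f])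
  have rN1: "resid d (d*a+f-1) = f'" unfolding f'_def by (rule resid_cases[OF d f a(1)])
  define aF where "aF n = calpha d k e f x q n * inverse (q^(n*(d*a+f)))" for n
  define bF where "bF n = cbeta d k e f x q n * (x*q^(n+1))^(d*a+f)" for n
  define aG where "aG n = calpha d k e f' x q n * inverse (q^(n*(d*a+f-1)))" for n
  define bG where "bG n = cbeta d k e f' x q n * (x*q^(n+1))^(d*a+f-1)" for n
  define A where "A n = aF n - aG n" for n
  define B where "B n = bF n - bG n" for n
  define Z where "Z = (x*q)^(d*a+f-1)"
  define R where "R n = talpha d k e (x*q) q n * inverse (q ^ (n*Nt)) + tbeta d k e (x*q) q n * (x*q*q^(n+1))^Nt" for n
  have saF: "summable aF" unfolding aF_def by (rule alpha_summable[OF q0 q x d e(2)])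
  have saG: "summable aG" unfolding aG_def by (rule alpha_summable[OF q0 q x d e(2)])
  have sbF: "summable bF" unfolding bF_def by (rule beta_summable[OF q0 q x d f(2)])
  have sbG: "summable bG" unfolding bG_def by (rule beta_summable[OF q0 q x d f'd])
  have sA: "summable A" unfolding A_def by (rule summable_diff[OF saF saG])
  have sB: "summable B" unfolding B_def by (rule summable_diff[OF sbF sbG])
  have C1: "Cfun d k e (d*a+f) x q = (\<Sum>n. aF n + bF n)" unfolding Cfun_def rN aF_def bF_def ..
  have C2: "Cfun d k e (d*a+f-1) x q = (\<Sum>n. aG n + bG n)" unfolding Cfun_def rN1 aG_def bG_def ..
  have "Cfun d k e (d*a+f) x q - Cfun d k e (d*a+f-1) x q = (\<Sum>n. (aF n + bF n) - (aG n + bG n))"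
    unfolding C1 C2 by (rule suminf_diff) (auto intro: summable_add saF sbF saG sbG)
  also have "\<dots> = (\<Sum>n. A n + B n)" unfolding A_def B_def by (simp add: algebra_simps)
  also have "\<dots> = suminf A + suminf B" by (rule suminf_add[OF sA sB, symmetric])
  also have "suminf A = (\<Sum>n. A (Suc n))"
  proof -
    have "A 0 = 0" unfolding A_def aF_def aG_def
      by (rule A0) (rule basic_nz(1)[OF q0 q x d])
    thus ?thesis using suminf_split_head[OF sA] by simp
  qed
  finally have L: "Cfun d k e (d*a+f) x q - Cfun d k e (d*a+f-1) x q = (\<Sum>n. A (Suc n)) + suminf B" .
  have ZR: "Z * R n = B n + A (Suc n)" for n
  proof -
    have "Z * R n = Z * (talpha d k e (x*q) q n * inverse (q ^ (n*Nt))) + Z * (tbeta d k e (x*q) q n * (x*q*q^(n+1))^Nt)"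
      unfolding R_def by (simp add: distrib_left)
    also have "Z * (talpha d k e (x*q) q n * inverse (q ^ (n*Nt))) = B n"
      unfolding Z_def B_def bF_def bG_def by (rule A1[OF q0 q x d a f e f'_def Nt_def, symmetric])
    also have "Z * (tbeta d k e (x*q) q n * (x*q*q^(n+1))^Nt) = A (Suc n)"
      unfolding Z_def A_def aF_def aG_def by (rule A2[OF q0 q x d a f e f'_def Nt_def])
    finally show ?thesis .
  qed
  have sAS: "summable (\<lambda>n. A (Suc n))" using sA by (simp add: summable_Suc_iff)
  have sZR: "summable (\<lambda>n. Z * R n)" unfolding ZR by (rule summable_add[OF sB sAS])
  have "(\<Sum>n. Z * R n) = suminf B + (\<Sum>n. A (Suc n))" unfolding ZR by (rule suminf_add[OF sB sAS, symmetric])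
  moreover have "(\<Sum>n. Z * R n) = Z * suminf R"
  proof (cases "Z = 0")
    case True
    then show ?thesis by simp
  next
    case False
    hence "summable R" using sZR by simp
    then show ?thesis by (rule suminf_mult)
  qed
  ultimately have Rfin: "Z * suminf R = Cfun d k e (d*a+f) x q - Cfun d k e (d*a+f-1) x q" using L by simp
  have T: "Tfun d k e Nt (x*q) q = suminf R" unfolding Tfun_def R_def ..
  show ?thesis using Rfin T unfolding Z_def Nt_def by (auto split: if_splits)
qed

end
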